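(* Let $D=(V,A)$ be a digraph with minimum in-degree at least 1, and let $\mathcal{L}D=\mathcal{L}_{(A',\phi)}D$ be a partial line digraph of $D$. Then (i) the number of kernels of $D$ equals the number of kernels of $\mathcal{L}D$; (ii) the number of quasikernels of $D$ is less than or equal to the number of quasikernels of $\mathcal{L}D$.
   Context: Digraphs are loopless and without multiple arcs. For a vertex $j$, $\omega^-(j)$ is the set of arcs with terminal vertex $j$; for a set of arcs $\Omega$, $H(\Omega)=\{y:(x,y)\in\Omega\}$. The arc $(x,y)$ is also written $xy$. $d(x,y)$ denotes directed distance and $d(x,K)=\min_{y\in K}d(x,y)$. Partial line digraph: given $D=(V,A)$ with minimum in-degree at least 1, take an arc subset $A'\subseteq A$ and a surjective map $\phi:A\to A'$ such that (i) $H(A')=V$; (ii) $\phi$ restricted to $A'$ is the identity, and for every vertex $j\in V$, $\phi(\omega^-(j))\subseteq\omega^-(j)\cap A'$. The partial line digraph $\mathcal{L}_{(A',\phi)}D$ has vertex set $A'$ and arc set $\{(ij,\phi(j,k)) : ij\in A',\ (j,k)\in A\}$. A $(k,l)$-kernel is a vertex set $K$ with $d(u,v)\ge k$ for all distinct $u,v\in K$ and $d(x,K)\le l$ for every vertex $x\notin K$. A kernel is a $(2,1)$-kernel (independent and every vertex outside has an out-neighbour inside); a quasikernel is a $(2,2)$-kernel. *)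

theory Defs
  imports Main "HOL-Library.Extended_Nat"
begin

text \<open>A finite digraph (V, A): arcs are pairs of vertices, no loops
  (no multiple arcs is automatic since A is a set).\<close>
definition digraph :: "'v set \<Rightarrow> ('v \<times> 'v) set \<Rightarrow> bool" where
  "digraph V A \<longleftrightarrow> finite V \<and> A \<subseteq> V \<times> V \<and> (\<forall>(x, y) \<in> A. x \<noteq> y)"

definition min_indeg_pos :: "'v set \<Rightarrow> ('v \<times> 'v) set \<Rightarrow> bool" where
  "min_indeg_pos V A \<longleftrightarrow> (\<forall>j \<in> V. \<exists>i. (i, j) \<in> A)"

definition in_arcs :: "('v \<times> 'v) set \<Rightarrow> 'v \<Rightarrow> ('v \<times> 'v) set" where
  "in_arcs A j = {a \<in> A. snd a = j}"

definition heads :: "('v \<times> 'v) set \<Rightarrow> 'v set" where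
  "heads \<Omega> = {y. \<exists>x. (x, y) \<in> \<Omega>}"

definition pld_data :: "'v set \<Rightarrow> ('v \<times> 'v) set \<Rightarrow> ('v \<times> 'v) set
    \<Rightarrow> (('v \<times> 'v) \<Rightarrow> ('v \<times> 'v)) \<Rightarrow> bool" where
  "pld_data V A A' \<phi> \<longleftrightarrow>
     A' \<subseteq> A \<and> \<phi> ` A = A' \<and> heads A' = V \<and>
     (\<forall>a \<in> A'. \<phi> a = a) \<and>
     (\<forall>j \<in> V. \<phi> ` (in_arcs A j) \<subseteq> in_arcs A j \<inter> A')"

text \<open>Arc set of the partial line digraph (its vertex set is A').\<close>
definition pld_arcs :: "('v \<times> 'v) set \<Rightarrow> ('v \<times> 'v) set
    \<Rightarrow> (('v \<times> 'v) \<Rightarrow> ('v \<times> 'v)) \<Rightarrow> (('v \<times> 'v) \<times> ('v \<times> 'v)) set" where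
  "pld_arcs A A' \<phi> = {((i, j), \<phi> (j, k)) | i j k. (i, j) \<in> A' \<and> (j, k) \<in> A}"

text \<open>Directed distance (infinity if there is no directed path).\<close>
definition ddist :: "('v \<times> 'v) set \<Rightarrow> 'v \<Rightarrow> 'v \<Rightarrow> enat" where
  "ddist A u v = Inf {enat n | n. (u, v) \<in> A ^^ n}"

definition ddist_set :: "('v \<times> 'v) set \<Rightarrow> 'v \<Rightarrow> 'v set \<Rightarrow> enat" where
  "ddist_set A x K = (INF y\<in>K. ddist A x y)"

definition kl_kernel :: "nat \<Rightarrow> nat \<Rightarrow> 'v set \<Rightarrow> ('v \<times> 'v) set \<Rightarrow> 'v set \<Rightarrow> bool" where
  "kl_kernel k l V A K \<longleftrightarrow> K \<subseteq> V \<and>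
     (\<forall>u \<in> K. \<forall>v \<in> K. u \<noteq> v \<longrightarrow> ddist A u v \<ge> enat k) \<and>
     (\<forall>x \<in> V - K. ddist_set A x K \<le> enat l)"

definition kernel :: "'v set \<Rightarrow> ('v \<times> 'v) set \<Rightarrow> 'v set \<Rightarrow> bool" where
  "kernel V A K \<longleftrightarrow> kl_kernel 2 1 V A K"

definition quasikernel :: "'v set \<Rightarrow> ('v \<times> 'v) set \<Rightarrow> 'v set \<Rightarrow> bool" where
  "quasikernel V A K \<longleftrightarrow> kl_kernel 2 2 V A K"

end

theory Submission
  imports Defs
begin

lemma Inf_enat_le_iff: "(Inf S :: enat) \<le> enat l \<longleftrightarrow> (\<exists>x\<in>S. x \<le> enat l)"
proof
  assume a: "Inf S \<le> enat l"
  have "S \<noteq> {}" using a by (auto simp: Inf_enat_def)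
  then have "Inf S \<in> S" by (auto simp: Inf_enat_def intro: LeastI)
  then show "\<exists>x\<in>S. x \<le> enat l" using a by blast
next
  assume "\<exists>x\<in>S. x \<le> enat l"
  then show "Inf S \<le> enat l" by (meson Inf_lower order_trans)
qed

lemma ddist_le: "ddist A u v \<le> enat l \<longleftrightarrow> (\<exists>n\<le>l. (u,v) \<in> A ^^ n)"
  unfolding ddist_def Inf_enat_le_iff by auto

lemma ddist_set_le: "ddist_set A x K \<le> enat l \<longleftrightarrow> (\<exists>y\<in>K. \<exists>n\<le>l. (x,y) \<in> A ^^ n)"
  unfolding ddist_set_def Inf_enat_le_iff by (auto simp: ddist_le)

lemma ge2: "enat 2 \<le> d \<longleftrightarrow> \<not> d \<le> enat 1"
  by (cases d) auto

lemma ex_le1: "(\<exists>n\<le>(1::nat). P n) \<longleftrightarrow> P 0 \<or> P 1"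
  using le_Suc_eq by auto

lemma ex_le2: "(\<exists>n\<le>(2::nat). P n) \<longleftrightarrow> P 0 \<or> P 1 \<or> P 2"
  by (metis One_nat_def le_Suc_eq le_zero_eq numeral_2_eq_2 order_refl)

lemma relpow2: "A ^^ 2 = A O A"
  by (simp add: numeral_2_eq_2)

lemma kernel_iff: "kernel V A K \<longleftrightarrow> K \<subseteq> V \<and> (\<forall>u\<in>K. \<forall>v\<in>K. u\<noteq>v \<longrightarrow> (u,v)\<notin>A)
   \<and> (\<forall>x\<in>V-K. \<exists>y\<in>K. (x,y)\<in>A)"
  unfolding kernel_def kl_kernel_def ge2 ddist_le ddist_set_le ex_le1
  by auto

lemma qkernel_iff: "quasikernel V A K \<longleftrightarrow> K \<subseteq> V \<and> (\<forall>u\<in>K. \<forall>v\<in>K. u\<noteq>v \<longrightarrow> (u,v)\<notin>A)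
   \<and> (\<forall>x\<in>V-K. \<exists>y\<in>K. (x,y)\<in>A \<or> (x,y) \<in> A O A)"
  unfolding quasikernel_def kl_kernel_def ge2 ddist_le ddist_set_le ex_le1 ex_le2 relpow2
  by (auto; blast)

lemma pld_arcsD: "(a,b) \<in> pld_arcs A A' \<phi> \<Longrightarrow> \<exists>i j k. a = (i,j) \<and> (i,j) \<in> A' \<and> (j,k) \<in> A \<and> b = \<phi> (j,k)"
  unfolding pld_arcs_def by auto

lemma pld_arcsI: "a \<in> A' \<Longrightarrow> (snd a,k) \<in> A \<Longrightarrow> (a, \<phi> (snd a,k)) \<in> pld_arcs A A' \<phi>"
  unfolding pld_arcs_def by (cases a) auto

theorem corollary2p5:
  fixes V :: "'v set" and A A' :: "('v \<times> 'v) set"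
    and \<phi> :: "('v \<times> 'v) \<Rightarrow> ('v \<times> 'v)"
  assumes "digraph V A" and "min_indeg_pos V A" and "pld_data V A A' \<phi>"
  shows "card {K. kernel V A K} = card {K. kernel A' (pld_arcs A A' \<phi>) K} \<and>
         card {K. quasikernel V A K} \<le> card {K. quasikernel A' (pld_arcs A A' \<phi>) K}"
proof -
  define L where "L = pld_arcs A A' \<phi>"
  have fin: "finite V" and AV: "A \<subseteq> V \<times> V" and loopless: "\<And>x y. (x,y) \<in> A \<Longrightarrow> x \<noteq> y"
    using assms(1) unfolding digraph_def by auto
  have A'A: "A' \<subseteq> A" and hd: "heads A' = V" and phiA: "\<And>j k. (j,k) \<in> A \<Longrightarrow> \<phi> (j,k) \<in> A' \<and> snd (\<phi> (j,k)) = k"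
  proof -
    show "A' \<subseteq> A" "heads A' = V" using assms(3) unfolding pld_data_def by auto
    fix j k assume jk: "(j,k) \<in> A"
    then have "k \<in> V" using AV by auto
    moreover have "(j,k) \<in> in_arcs A k" using jk by (simp add: in_arcs_def)
    ultimately show "\<phi> (j,k) \<in> A' \<and> snd (\<phi> (j,k)) = k"
      using assms(3) unfolding pld_data_def in_arcs_def by blast
  qed
  have finA': "finite A'" using A'A AV fin by (meson finite_SigmaI finite_subset)
  have hdex: "\<exists>a\<in>A'. snd a = j" if j: "j \<in> V" for j
  proof -
    have "j \<in> heads A'" using hd j by simp
    then obtain x where "(x,j) \<in> A'" unfolding heads_def by blast
    then show ?thesis by force
  qed
  have A'V: "\<And>a. a \<in> A' \<Longrightarrow> snd a \<in> V" using A'A AV by auto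
  have Ldest: "\<And>a b. (a,b) \<in> L \<Longrightarrow> a \<in> A' \<and> (snd a, snd b) \<in> A \<and> b = \<phi> (snd a, snd b)"
  proof -
    fix a b assume "(a,b) \<in> L"
    then obtain i j k where "a = (i,j)" "(i,j) \<in> A'" "(j,k) \<in> A" "b = \<phi> (j,k)"
      using pld_arcsD unfolding L_def by metis
    then show "a \<in> A' \<and> (snd a, snd b) \<in> A \<and> b = \<phi> (snd a, snd b)" using phiA by auto
  qed
  have LI: "\<And>a k. a \<in> A' \<Longrightarrow> (snd a, k) \<in> A \<Longrightarrow> (a, \<phi> (snd a, k)) \<in> L"
    unfolding L_def by (rule pld_arcsI)
  define F where "F K = {a \<in> A'. snd a \<in> K}" for K
  have GF: "snd ` F K = K" if KV: "K \<subseteq> V" for K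
  proof
    show "snd ` F K \<subseteq> K" unfolding F_def by blast
    show "K \<subseteq> snd ` F K"
    proof
      fix j assume j: "j \<in> K"
      then obtain a where "a \<in> A'" "snd a = j" using hdex KV by blast
      then show "j \<in> snd ` F K" using j unfolding F_def by force
    qed
  qed
  have indepF: "\<forall>u\<in>F K. \<forall>v\<in>F K. u\<noteq>v \<longrightarrow> (u,v)\<notin>L"
    if "\<forall>u\<in>K. \<forall>v\<in>K. u\<noteq>v \<longrightarrow> (u,v)\<notin>A" for K
  proof (intro ballI impI notI)
    fix u v assume u: "u \<in> F K" and v: "v \<in> F K" and uv: "u \<noteq> v" and L: "(u,v) \<in> L"
    have "(snd u, snd v) \<in> A" using Ldest[OF L] by blast
    moreover have "snd u \<in> K" "snd v \<in> K" using u v unfolding F_def by auto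
    ultimately show False using that loopless by blast
  qed
  have injF: "inj_on F {K. K \<subseteq> V}"
    by (rule inj_onI) (metis GF mem_Collect_eq)
  have kF: "kernel A' L (F K)" if kK: "kernel V A K" for K
  proof -
    have "\<forall>x\<in>A'-F K. \<exists>y\<in>F K. (x,y)\<in>L"
    proof
      fix x assume x: "x \<in> A' - F K"
      then have "snd x \<in> V - K" using A'V unfolding F_def by auto
      then obtain k where "k \<in> K" "(snd x, k) \<in> A" using kK[unfolded kernel_iff] by blast
      moreover have "\<phi> (snd x, k) \<in> F K" using phiA[OF \<open>(snd x, k) \<in> A\<close>] \<open>k \<in> K\<close> unfolding F_def by auto
      ultimately show "\<exists>y\<in>F K. (x,y)\<in>L" using LI[of x k] x by auto
    qed
    moreover have "F K \<subseteq> A'" unfolding F_def by auto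
    moreover have "\<forall>u\<in>F K. \<forall>v\<in>F K. u\<noteq>v \<longrightarrow> (u,v)\<notin>L" using kK[unfolded kernel_iff] by (intro indepF) blast
    ultimately show ?thesis unfolding kernel_iff by blast
  qed
  have qF: "quasikernel A' L (F K)" if kK: "quasikernel V A K" for K
  proof -
    have "\<forall>x\<in>A'-F K. \<exists>y\<in>F K. (x,y)\<in>L \<or> (x,y) \<in> L O L"
    proof
      fix x assume x: "x \<in> A' - F K"
      then have "snd x \<in> V - K" using A'V unfolding F_def by auto
      then obtain m where m: "m \<in> K" "(snd x, m) \<in> A \<or> (snd x, m) \<in> A O A" using kK[unfolded qkernel_iff] by blast
      show "\<exists>y\<in>F K. (x,y)\<in>L \<or> (x,y) \<in> L O L"
      proof (cases "(snd x, m) \<in> A")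
        case True
        moreover have "\<phi> (snd x, m) \<in> F K" using phiA[OF True] m unfolding F_def by auto
        ultimately show ?thesis using LI[of x m] x by auto
      next
        case False
        then obtain k where k: "(snd x, k) \<in> A" "(k, m) \<in> A" using m by auto
        define b where "b = \<phi> (snd x, k)"
        have b: "b \<in> A'" "snd b = k" "(x,b) \<in> L" using phiA[OF k(1)] LI[of x k] k x unfolding b_def by auto
        have "(b, \<phi> (k,m)) \<in> L" using LI[of b m] b k by auto
        then have "(x, \<phi> (k,m)) \<in> L O L" using b by blast
        moreover have "\<phi> (k,m) \<in> F K" using phiA[OF k(2)] m unfolding F_def by auto
        ultimately show ?thesis by blast
      qed
    qed
    moreover have "F K \<subseteq> A'" unfolding F_def by auto
    moreover have "\<forall>u\<in>F K. \<forall>v\<in>F K. u\<noteq>v \<longrightarrow> (u,v)\<notin>L" using kK[unfolded qkernel_iff] by (intro indepF) blast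
    ultimately show ?thesis unfolding qkernel_iff by blast
  qed
  have kG: "kernel V A (snd ` K') \<and> F (snd ` K') = K'" if K': "kernel A' L K'" for K'
  proof -
    have sub: "K' \<subseteq> A'" and ind: "\<forall>u\<in>K'. \<forall>v\<in>K'. u\<noteq>v \<longrightarrow> (u,v)\<notin>L"
      and abs: "\<forall>x\<in>A'-K'. \<exists>y\<in>K'. (x,y)\<in>L" using K'[unfolded kernel_iff] by auto
    have closed: "a \<in> K'" if a: "a \<in> A'" "b \<in> K'" "snd a = snd b" for a b
    proof (rule ccontr)
      assume "a \<notin> K'"
      then obtain c where c: "c \<in> K'" "(a,c) \<in> L" using abs a by blast
      then have "(snd a, snd c) \<in> A" "c = \<phi> (snd a, snd c)" using Ldest[OF c(2)] by blast+
      then have "(b,c) \<in> L" using LI[of b "snd c"] a sub by auto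
      moreover have "b \<noteq> c" using \<open>(snd a, snd c) \<in> A\<close> loopless a by auto
      ultimately show False using ind a c by blast
    qed
    have FG: "F (snd ` K') = K'" unfolding F_def using sub closed by auto
    have "\<forall>u\<in>snd ` K'. \<forall>v\<in>snd ` K'. u\<noteq>v \<longrightarrow> (u,v)\<notin>A"
    proof (intro ballI impI notI)
      fix u v assume u: "u \<in> snd ` K'" and v: "v \<in> snd ` K'" and uv: "u \<noteq> v" and A: "(u,v) \<in> A"
      obtain a where a: "a \<in> K'" "snd a = u" using u by auto
      have "(a, \<phi> (u,v)) \<in> L" using LI[of a v] a sub A by auto
      moreover have "\<phi> (u,v) \<in> K'"
      proof -
        obtain b where b: "b \<in> K'" "snd b = v" using v by auto
        show ?thesis using closed[of "\<phi> (u,v)" b] phiA[OF A] b by auto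
      qed
      moreover have "a \<noteq> \<phi> (u,v)" using phiA[OF A] a uv by auto
      ultimately show False using ind a by blast
    qed
    moreover have "\<forall>x\<in>V - snd ` K'. \<exists>y\<in>snd ` K'. (x,y)\<in>A"
    proof
      fix x assume x: "x \<in> V - snd ` K'"
      then obtain a where a: "a \<in> A'" "snd a = x" using hdex by blast
      then have "a \<notin> K'" using x by auto
      then obtain c where "c \<in> K'" "(a,c) \<in> L" using abs a by blast
      then have "(x, snd c) \<in> A" "snd c \<in> snd ` K'" using Ldest[of a c] a \<open>c \<in> K'\<close> by blast+
      then show "\<exists>y\<in>snd ` K'. (x,y)\<in>A" by blast
    qed
    moreover have "snd ` K' \<subseteq> V" using sub A'V by auto
    ultimately have "kernel V A (snd ` K')" unfolding kernel_iff by blast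
    then show ?thesis using FG by blast
  qed
  have kV: "\<And>K. kernel V A K \<Longrightarrow> K \<subseteq> V" unfolding kernel_iff by blast
  have qV: "\<And>K. quasikernel V A K \<Longrightarrow> K \<subseteq> V" unfolding qkernel_iff by blast
  have "bij_betw F {K. kernel V A K} {K. kernel A' L K}"
    unfolding bij_betw_def
  proof
    show "inj_on F {K. kernel V A K}"
      by (rule inj_on_subset[OF injF]) (use kV in blast)
    show "F ` {K. kernel V A K} = {K. kernel A' L K}"
    proof
      show "F ` {K. kernel V A K} \<subseteq> {K. kernel A' L K}"
      proof
        fix X assume "X \<in> F ` {K. kernel V A K}"
        then obtain K where "kernel V A K" "X = F K" by blast
        then show "X \<in> {K. kernel A' L K}" using kF by simp
      qed
      show "{K. kernel A' L K} \<subseteq> F ` {K. kernel V A K}"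
      proof
        fix K' assume "K' \<in> {K. kernel A' L K}"
        then have h: "kernel V A (snd ` K')" "F (snd ` K') = K'" using kG by simp_all
        show "K' \<in> F ` {K. kernel V A K}"
        proof (rule image_eqI)
          show "K' = F (snd ` K')" using h(2) by simp
          show "snd ` K' \<in> {K. kernel V A K}" using h(1) by simp
        qed
      qed
    qed
  qed
  then have c1: "card {K. kernel V A K} = card {K. kernel A' L K}" by (rule bij_betw_same_card)
  have fq: "finite {K. quasikernel A' L K}"
  proof (rule finite_subset[of _ "Pow A'"])
    show "{K. quasikernel A' L K} \<subseteq> Pow A'" unfolding qkernel_iff by blast
    show "finite (Pow A')" using finA' by simp
  qed
  have iq: "inj_on F {K. quasikernel V A K}"
    by (rule inj_on_subset[OF injF]) (use qV in blast)
  have sq: "F ` {K. quasikernel V A K} \<subseteq> {K. quasikernel A' L K}"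
  proof
    fix X assume "X \<in> F ` {K. quasikernel V A K}"
    then obtain K where "quasikernel V A K" "X = F K" by blast
    then show "X \<in> {K. quasikernel A' L K}" using qF by simp
  qed
  have c2: "card {K. quasikernel V A K} \<le> card {K. quasikernel A' L K}"
    using card_inj_on_le[OF iq sq fq] .
  show ?thesis using c1 c2 unfolding L_def by simp
qed

end
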